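(* Let $X$ be an abelian metric group and let $f:X\to\mathbb{R}$ be a subadditive function. Suppose there exist a set $T\subset X$ and $k\in\mathbb{N}$ such that $f$ is bounded above on $T$ and the $k$-fold sum $\sum_{i=1}^k T=\{t_1+\dots+t_k: t_1,\dots,t_k\in T\}$ is shift-compact. Then $f$ is locally bounded at each point of $X$, i.e. every $x\in X$ has a neighbourhood on which $|f|$ is bounded.
   Context: An abelian metric group is an abelian topological group whose topology is given by an invariant metric. A function $f:X\to\mathbb{R}$ is subadditive if $f(x+y)\le f(x)+f(y)$ for all $x,y\in X$. A set $A\subset X$ is shift-compact if for every sequence $(x_n)_{n\in\mathbb{N}}$ tending to $0$ in $X$ there exists $x\in X$ such that the set $\{n\in\mathbb{N}: x+x_n\in A\}$ is infinite. *)

theory Defs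
  imports "HOL-Analysis.Analysis"
begin

text \<open>An abelian metric group: an abelian group carrying a metric that is
  translation invariant (this makes addition and negation continuous, so the
  metric topology is a group topology).\<close>
definition invariant_metric :: "('a::{ab_group_add, metric_space}) itself \<Rightarrow> bool" where
  "invariant_metric _ \<longleftrightarrow> (\<forall>x y z::'a. dist (x + z) (y + z) = dist x y)"

definition subadditive :: "('a::ab_group_add \<Rightarrow> real) \<Rightarrow> bool" where
  "subadditive f \<longleftrightarrow> (\<forall>x y. f (x + y) \<le> f x + f y)"

definition shift_compact :: "('a::{ab_group_add, metric_space}) set \<Rightarrow> bool" where
  "shift_compact A \<longleftrightarrow>
     (\<forall>xs::nat \<Rightarrow> 'a. xs \<longlonglongrightarrow> 0 \<longrightarrow> (\<exists>x. infinite {n. x + xs n \<in> A}))"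

definition ksum :: "nat \<Rightarrow> ('a::ab_group_add) set \<Rightarrow> 'a set" where
  "ksum k T = {sum_list ts | ts. length ts = k \<and> set ts \<subseteq> T}"

definition locally_bounded_at :: "('a::metric_space \<Rightarrow> real) \<Rightarrow> 'a \<Rightarrow> bool" where
  "locally_bounded_at f x \<longleftrightarrow> (\<exists>U. open U \<and> x \<in> U \<and> (\<exists>B. \<forall>y\<in>U. \<bar>f y\<bar> \<le> B))"

end

theory Submission
  imports Defs
begin

lemma sumlist_bound:
  assumes sa: "subadditive f" and M: "\<forall>t\<in>T. f t \<le> M"
  shows "set ts \<subseteq> T \<Longrightarrow> f (sum_list ts) \<le> max (f 0) 0 + real (length ts) * max M 0"
proof (induction ts)
  case Nil then show ?case by simp
next
  case (Cons a ts)
  have "f (a + sum_list ts) \<le> f a + f (sum_list ts)" using sa unfolding subadditive_def by blast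
  moreover have "f a \<le> max M 0" using M Cons.prems by force
  moreover have "f (sum_list ts) \<le> max (f 0) 0 + real (length ts) * max M 0" using Cons by simp
  ultimately show ?case by (simp add: algebra_simps)
qed

theorem theorem2p2:
  fixes f :: "'a::{ab_group_add, metric_space} \<Rightarrow> real"
    and T :: "'a set" and k :: nat
  assumes "invariant_metric TYPE('a)"
    and "subadditive f"
    and "k \<ge> 1"
    and "\<exists>M. \<forall>t\<in>T. f t \<le> M"
    and "shift_compact (ksum k T)"
  shows "\<forall>x. locally_bounded_at f x"
proof -
  have inv: "\<And>x y z::'a. dist (x + z) (y + z) = dist x y"
    using assms(1) unfolding invariant_metric_def by blast
  have sa: "\<And>x y. f (x + y) \<le> f x + f y" using assms(2) unfolding subadditive_def by blast
  obtain M where M: "\<forall>t\<in>T. f t \<le> M" using assms(4) by blast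
  define K where "K = max (f 0) 0 + real k * max M 0"
  have SK: "\<forall>s\<in>ksum k T. f s \<le> K"
    using sumlist_bound[OF assms(2) M] unfolding ksum_def K_def by auto
  have "\<exists>\<delta>>0. \<exists>B. \<forall>y. dist y 0 < \<delta> \<longrightarrow> f y \<le> B"
  proof (rule ccontr)
    assume "\<not> ?thesis"
    then have "\<forall>n::nat. \<exists>z. dist z 0 < 1 / real (Suc n) \<and> f z > real n"
      by (metis divide_pos_pos not_le of_nat_0_less_iff zero_less_Suc zero_less_one)
    then obtain z where z: "\<And>n. dist (z n) 0 < 1 / real (Suc n)" "\<And>n. f (z n) > real n"
      by metis
    have "z \<longlonglongrightarrow> 0"
      unfolding lim_sequentially
    proof (intro allI impI)
      fix r :: real assume "0 < r"
      then obtain N where N: "1 / real (Suc N) < r" using nat_approx_posE by blast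
      show "\<exists>no. \<forall>n\<ge>no. dist (z n) 0 < r"
      proof (intro exI allI impI)
        fix n assume "N \<le> n"
        then have "1 / real (Suc n) \<le> 1 / real (Suc N)"
          by (simp add: frac_le)
        then show "dist (z n) 0 < r" using z(1)[of n] N by linarith
      qed
    qed
    then obtain x where x: "infinite {n. x + z n \<in> ksum k T}"
      using assms(5) unfolding shift_compact_def by blast
    have "{n. x + z n \<in> ksum k T} \<subseteq> {..nat \<lceil>K + f (- x)\<rceil>}"
    proof
      fix n assume "n \<in> {n. x + z n \<in> ksum k T}"
      then have "f (x + z n) \<le> K" using SK by blast
      moreover have "f (z n) \<le> f (x + z n) + f (- x)"
        using sa[of "x + z n" "- x"] by (simp add: algebra_simps)
      ultimately have "real n < K + f (- x)" using z(2)[of n] by linarith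
      then show "n \<in> {..nat \<lceil>K + f (- x)\<rceil>}" by simp linarith
    qed
    then show False using x finite_subset by blast
  qed
  then obtain \<delta> B where d: "\<delta> > 0" and B: "\<And>y. dist y 0 < \<delta> \<Longrightarrow> f y \<le> B" by blast
  show ?thesis
    unfolding locally_bounded_at_def
  proof
    fix x :: 'a
    show "\<exists>U. open U \<and> x \<in> U \<and> (\<exists>B. \<forall>y\<in>U. \<bar>f y\<bar> \<le> B)"
    proof (intro exI conjI)
      show "open (ball x \<delta>)" by simp
      show "x \<in> ball x \<delta>" using d by simp
      show "\<forall>y\<in>ball x \<delta>. \<bar>f y\<bar> \<le> \<bar>f x\<bar> + \<bar>B\<bar>"
      proof
        fix y assume "y \<in> ball x \<delta>"
        then have dy: "dist y x < \<delta>" by (simp add: dist_commute)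
        define w where "w = y - x"
        have "dist w 0 = dist (y + - x) (x + - x)" using inv unfolding w_def by simp
        also have "\<dots> = dist y x" by (rule inv)
        finally have dw: "dist w 0 = dist y x" .
        then have w1: "f w \<le> B" using B dy by simp
        have "dist (- w) 0 = dist (- w + w) (0 + w)" using inv by metis
        also have "\<dots> = dist 0 w" by simp
        also have "\<dots> = dist w 0" by (simp add: dist_commute)
        finally have "dist (- w) 0 < \<delta>" using dw dy by simp
        then have w2: "f (- w) \<le> B" using B by blast
        have yw: "y = x + w" unfolding w_def by simp
        have "f y \<le> f x + f w" using sa yw by simp
        moreover have "f x \<le> f y + f (- w)" using sa[of y "- w"] yw by simp
        ultimately show "\<bar>f y\<bar> \<le> \<bar>f x\<bar> + \<bar>B\<bar>" using w1 w2 by linarith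
      qed
    qed
  qed
qed

end
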